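(* Let $\mathcal{H}_A,\mathcal{H}_B,\mathcal{H}_C$ be finite-dimensional Hilbert spaces. For any strictly positive definite density matrix $\rho_{AB}$ on $\mathcal{H}_A\otimes\mathcal{H}_B$ and any strictly positive definite density matrix $\sigma_{BC}$ on $\mathcal{H}_B\otimes\mathcal{H}_C$, $$\rho_A^{-1}\otimes \sigma_{BC} \;\leq\; \rho_{AB}^{-1}\otimes \sigma_C$$ as operators on $\mathcal{H}_A\otimes\mathcal{H}_B\otimes\mathcal{H}_C$.
   Context: A density matrix is a positive semidefinite operator of trace one. Marginals are partial traces: $\rho_A=\mathrm{Tr}_B\,\rho_{AB}$, $\sigma_C=\mathrm{Tr}_B\,\sigma_{BC}$. The tensor factors are ordered as $\mathcal{H}_A\otimes\mathcal{H}_B\otimes\mathcal{H}_C$ (so $\rho_A^{-1}\otimes\sigma_{BC}$ acts as $\rho_A^{-1}$ on $A$ and $\sigma_{BC}$ on $BC$, and $\rho_{AB}^{-1}\otimes\sigma_C$ acts as $\rho_{AB}^{-1}$ on $AB$ and $\sigma_C$ on $C$). For Hermitian operators, $X\leq Y$ means $Y-X$ is positive semidefinite. *)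

theory Defs
  imports "HOL-Analysis.Analysis"
begin

text \<open>Operators on a finite-dimensional Hilbert space with orthonormal basis indexed by
  a finite type 'i are represented as complex matrices of type complex^'i^'i.
  The composite system AB has index type 'a \<times> 'b, and ABC has index type 'a \<times> 'b \<times> 'c.\<close>

definition hermitian :: "complex^('i::finite)^'i \<Rightarrow> bool" where
  "hermitian M \<longleftrightarrow> (\<forall>i j. M $ i $ j = cnj (M $ j $ i))"

definition qform :: "complex^('i::finite)^'i \<Rightarrow> ('i \<Rightarrow> complex) \<Rightarrow> complex" where
  "qform M x = (\<Sum>i\<in>UNIV. \<Sum>j\<in>UNIV. cnj (x i) * M $ i $ j * x j)"

definition psd :: "complex^('i::finite)^'i \<Rightarrow> bool" where
  "psd M \<longleftrightarrow> hermitian M \<and> (\<forall>x. 0 \<le> Re (qform M x))"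

definition pd :: "complex^('i::finite)^'i \<Rightarrow> bool" where
  "pd M \<longleftrightarrow> hermitian M \<and> (\<forall>x. x \<noteq> (\<lambda>_. 0) \<longrightarrow> 0 < Re (qform M x))"

definition density :: "complex^('i::finite)^'i \<Rightarrow> bool" where
  "density M \<longleftrightarrow> psd M \<and> trace M = 1"

definition loewner_le :: "complex^('i::finite)^'i \<Rightarrow> complex^'i^'i \<Rightarrow> bool" where
  "loewner_le X Y \<longleftrightarrow> psd (Y - X)"

definition ptrace2 :: "complex^('a::finite \<times> 'b::finite)^('a \<times> 'b) \<Rightarrow> complex^'a^'a" where
  "ptrace2 M = (\<chi> a. \<chi> a'. \<Sum>b\<in>UNIV. M $ (a, b) $ (a', b))"

definition ptrace1 :: "complex^('a::finite \<times> 'b::finite)^('a \<times> 'b) \<Rightarrow> complex^'b^'b" where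
  "ptrace1 M = (\<chi> b. \<chi> b'. \<Sum>a\<in>UNIV. M $ (a, b) $ (a, b'))"

definition kron :: "complex^('a::finite)^'a \<Rightarrow> complex^('b::finite)^'b \<Rightarrow> complex^('a \<times> 'b)^('a \<times> 'b)" where
  "kron X Y = (\<chi> p. \<chi> q. X $ fst p $ fst q * Y $ snd p $ snd q)"

text \<open>Canonical identification (H_A \<otimes> H_B) \<otimes> H_C = H_A \<otimes> (H_B \<otimes> H_C).\<close>
definition reassoc :: "complex^(('a::finite \<times> 'b::finite) \<times> 'c::finite)^(('a \<times> 'b) \<times> 'c) \<Rightarrow> complex^('a \<times> 'b \<times> 'c)^('a \<times> 'b \<times> 'c)" where
  "reassoc M = (\<chi> p. \<chi> q. M $ ((fst p, fst (snd p)), snd (snd p)) $ ((fst q, fst (snd q)), snd (snd q)))"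

end

theory Submission
  imports Defs
begin

lemma herm_cnj: "hermitian H \<Longrightarrow> cnj (H $ i $ j) = H $ j $ i"
  unfolding hermitian_def by (metis complex_cnj_cnj)

lemma herm_I: "(\<And>i j. cnj (H $ j $ i) = H $ i $ j) \<Longrightarrow> hermitian H"
  unfolding hermitian_def by (metis complex_cnj_cnj)

definition mv :: "complex^('i::finite)^'i \<Rightarrow> ('i \<Rightarrow> complex) \<Rightarrow> 'i \<Rightarrow> complex" where
  "mv H x = (\<lambda>i. \<Sum>j\<in>UNIV. H $ i $ j * x j)"

definition bil :: "complex^('i::finite)^'i \<Rightarrow> ('i \<Rightarrow> complex) \<Rightarrow> ('i \<Rightarrow> complex) \<Rightarrow> complex" where
  "bil H x z = (\<Sum>i\<in>UNIV. cnj (x i) * mv H z i)"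

lemma qform_bil: "qform H x = bil H x x"
  unfolding qform_def bil_def mv_def by (simp add: sum_distrib_left mult.assoc)

lemma bil_diff_left: "bil H (\<lambda>i. x i - y i) z = bil H x z - bil H y z"
  unfolding bil_def by (simp add: sum_subtractf ring_distribs)

lemma mv_diff: "mv H (\<lambda>i. x i - y i) = (\<lambda>i. mv H x i - mv H y i)"
  unfolding mv_def by (simp add: sum_subtractf ring_distribs)

lemma bil_diff_right: "bil H x (\<lambda>i. z i - y i) = bil H x z - bil H x y"
  unfolding bil_def by (simp add: mv_diff sum_subtractf ring_distribs)

lemma herm_swap:
  assumes "hermitian H"
  shows "(\<Sum>i\<in>UNIV. cnj (mv H y i) * z i) = bil H y z"
proof -
  have "(\<Sum>i\<in>UNIV. cnj (mv H y i) * z i) = (\<Sum>i\<in>UNIV. \<Sum>j\<in>UNIV. H $ j $ i * cnj (y j) * z i)"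
    unfolding mv_def using assms
    by (simp add: sum_distrib_right sum_distrib_left herm_cnj[OF assms] mult.commute mult.left_commute)
  also have "\<dots> = bil H y z"
    unfolding bil_def mv_def by (subst sum.swap) (simp add: sum_distrib_left mult.commute mult.left_commute)
  finally show ?thesis .
qed

lemma bil_cnj:
  assumes "hermitian H"
  shows "bil H z y = cnj (bil H y z)"
proof -
  have "cnj (bil H y z) = (\<Sum>i\<in>UNIV. cnj (mv H z i) * y i)"
    unfolding bil_def by (simp add: mult.commute)
  then show ?thesis using herm_swap[OF assms] by simp
qed

lemma mv_mult: "mv (A ** B) x = mv A (mv B x)"
proof (rule ext)
  fix i
  have "mv (A ** B) x i = (\<Sum>j\<in>UNIV. \<Sum>k\<in>UNIV. A $ i $ k * B $ k $ j * x j)"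
    unfolding mv_def matrix_matrix_mult_def by (simp add: sum_distrib_right)
  also have "\<dots> = (\<Sum>k\<in>UNIV. \<Sum>j\<in>UNIV. A $ i $ k * B $ k $ j * x j)"
    by (rule sum.swap)
  also have "\<dots> = mv A (mv B x) i"
    unfolding mv_def by (simp add: sum_distrib_left mult.assoc)
  finally show "mv (A ** B) x i = mv A (mv B x) i" .
qed

lemma mat1_comp: "(mat 1 :: complex^'i^'i) $ i $ j = (if i = j then 1 else 0)"
  by (simp add: mat_def)

lemma mv_one: "mv (mat 1) (x::'i::finite \<Rightarrow> complex) = x"
proof (rule ext)
  fix i
  have "(\<Sum>j\<in>UNIV. (mat 1 :: complex^'i^'i) $ i $ j * x j) = (\<Sum>j\<in>UNIV. if i = j then x j else 0)"
    by (rule sum.cong) (auto simp: mat1_comp)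
  then show "mv (mat 1) x i = x i" unfolding mv_def by simp
qed

definition ev :: "'i \<Rightarrow> 'i \<Rightarrow> complex" where "ev i0 = (\<lambda>k. if k = i0 then 1 else 0)"

lemma mv_ev: "mv H (ev j) i = H $ i $ j"
  unfolding mv_def ev_def by (simp add: if_distrib cong: if_cong)

lemma bil_ev_left: "bil H (ev i) z = mv H z i"
proof -
  have "(\<Sum>k\<in>UNIV. cnj (ev i k) * mv H z k) = (\<Sum>k\<in>UNIV. if k = i then mv H z k else 0)"
    by (rule sum.cong) (auto simp: ev_def)
  then show ?thesis unfolding bil_def by simp
qed

lemma bil_ev_ev: "bil H (ev i) (ev j) = H $ i $ j"
  by (simp add: bil_ev_left mv_ev)

lemma bil_add_left: "bil H (\<lambda>i. x i + y i) z = bil H x z + bil H y z"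
  unfolding bil_def by (simp add: sum.distrib ring_distribs)

lemma mv_add: "mv H (\<lambda>i. x i + y i) = (\<lambda>i. mv H x i + mv H y i)"
  unfolding mv_def by (simp add: sum.distrib ring_distribs)

lemma bil_add_right: "bil H x (\<lambda>i. z i + y i) = bil H x z + bil H x y"
  unfolding bil_def by (simp add: mv_add sum.distrib ring_distribs)

lemma bil_scale_left: "bil H (\<lambda>i. a * x i) z = cnj a * bil H x z"
  unfolding bil_def by (simp add: sum_distrib_left mult.assoc)

lemma mv_scale: "mv H (\<lambda>i. a * x i) = (\<lambda>i. a * mv H x i)"
  unfolding mv_def by (simp add: sum_distrib_left mult.assoc mult.left_commute)

lemma bil_scale_right: "bil H x (\<lambda>i. a * z i) = a * bil H x z"
  unfolding bil_def by (simp add: mv_scale sum_distrib_left mult.left_commute)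

lemma pd_invertible:
  fixes H :: "complex^('i::finite)^'i"
  assumes "pd H"
  shows "H ** matrix_inv H = mat 1 \<and> matrix_inv H ** H = mat 1"
proof -
  have "\<forall>x. H *v x = 0 \<longrightarrow> x = 0"
  proof (intro allI impI)
    fix x :: "complex^'i" assume Hx: "H *v x = 0"
    define f where "f = (\<lambda>i. x $ i)"
    have "mv H f = (\<lambda>_. 0)"
      using Hx unfolding mv_def f_def by (auto simp: matrix_vector_mult_def vec_eq_iff)
    then have "qform H f = 0" unfolding qform_bil bil_def by simp
    then have "f = (\<lambda>_. 0)" using assms unfolding pd_def by force
    then show "x = 0" unfolding f_def by (auto simp: vec_eq_iff fun_eq_iff)
  qed
  then have "\<exists>B. B ** H = mat 1" using matrix_left_invertible_ker by blast
  then have "invertible H" using invertible_left_inverse by blast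
  then show ?thesis unfolding invertible_def matrix_inv_def by (rule someI_ex)
qed

lemma inv_herm:
  fixes H M :: "complex^('i::finite)^'i"
  assumes h: "hermitian H" and HM: "H ** M = mat 1" and MH: "M ** H = mat 1"
  shows "hermitian M"
proof -
  define M' where "M' = (\<chi> i j. cnj (M $ j $ i))"
  have "H ** M' = mat 1"
  proof -
    have "(H ** M') $ i $ j = (mat 1 :: complex^'i^'i) $ i $ j" for i j
    proof -
      have "(H ** M') $ i $ j = (\<Sum>k\<in>UNIV. H $ i $ k * cnj (M $ j $ k))"
        unfolding M'_def matrix_matrix_mult_def by simp
      also have "\<dots> = cnj (\<Sum>k\<in>UNIV. M $ j $ k * H $ k $ i)"
        by (simp add: herm_cnj[OF h] mult.commute)
      also have "\<dots> = cnj ((M ** H) $ j $ i)" unfolding matrix_matrix_mult_def by simp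
      also have "\<dots> = (mat 1 :: complex^'i^'i) $ i $ j" using MH by (simp add: mat1_comp)
      finally show ?thesis .
    qed
    then show ?thesis by (simp add: vec_eq_iff)
  qed
  then have "M' = M"
    by (metis MH matrix_mul_assoc matrix_mul_lid matrix_mul_rid)
  then show ?thesis unfolding hermitian_def M'_def
    by (metis (no_types, lifting) complex_cnj_cnj vec_lambda_beta)
qed

lemma bil_rank1_diff:
  fixes H :: "complex^('i::finite)^'i"
  shows "bil (\<chi> i j. H $ i $ j - a i * b j) x z = bil H x z - (\<Sum>i\<in>UNIV. cnj (x i) * a i) * (\<Sum>j\<in>UNIV. b j * z j)"
  unfolding bil_def mv_def
  by (simp add: ring_distribs sum_subtractf sum_distrib_left sum_distrib_right mult.assoc mult.left_commute) (rule sum.swap)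

lemma psd_zero_row:
  fixes H :: "complex^('i::finite)^'i"
  assumes h: "hermitian H" and ps: "\<forall>x. 0 \<le> Re (qform H x)" and d0: "H $ i0 $ i0 = 0"
  shows "H $ i0 $ j = 0"
proof (rule ccontr)
  define c where "c = H $ i0 $ j"
  assume "H $ i0 $ j \<noteq> 0"
  then have c0: "c \<noteq> 0" unfolding c_def .
  define s where "s = (Re (H $ j $ j) + 1) / (2 * (cmod c)^2)"
  define t where "t = - (complex_of_real s * c)"
  define x where "x = (\<lambda>k. ev j k + t * ev i0 k)"
  have hji: "H $ j $ i0 = cnj c" using herm_cnj[OF h, of i0 j] unfolding c_def by simp
  have "qform H x = H $ j $ j + t * cnj c + cnj t * c + cnj t * t * H $ i0 $ i0"
    unfolding qform_bil x_def
    by (simp add: bil_add_left bil_add_right bil_scale_left bil_scale_right bil_ev_ev hji c_def algebra_simps)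
  also have "\<dots> = H $ j $ j - 2 * complex_of_real s * (c * cnj c)"
    unfolding t_def d0 by (simp add: algebra_simps)
  finally have "Re (qform H x) = Re (H $ j $ j) - 2 * s * (cmod c)^2"
    by (simp add: complex_norm_square[symmetric])
  also have "\<dots> = -1" unfolding s_def using c0 by (simp add: field_simps)
  finally show False using ps by (metis neg_0_le_iff_le not_one_le_zero)
qed

lemma gram_aux:
  fixes S :: "'i::finite set"
  assumes "finite S"
  shows "\<And>H::complex^'i^'i. hermitian H \<Longrightarrow> (\<forall>x. 0 \<le> Re (qform H x)) \<Longrightarrow> (\<forall>i j. i \<notin> S \<longrightarrow> H $ i $ j = 0)
     \<Longrightarrow> \<exists>(n::nat) g. \<forall>i j. H $ i $ j = (\<Sum>k<n. g k i * cnj (g k j))"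
  using assms
proof (induction S rule: finite_induct)
  case (empty H)
  show ?case
    apply (rule exI[where x="0::nat"])
    apply (rule exI[where x="\<lambda>(_::nat) (_::'i). 0::complex"])
    using empty.prems by simp
next
  case (insert i0 S H)
  note h = insert.prems(1) and ps = insert.prems(2) and supp = insert.prems(3)
  show ?case
  proof (cases "H $ i0 $ i0 = 0")
    case True
    have "\<forall>i j. i \<notin> S \<longrightarrow> H $ i $ j = 0"
      using psd_zero_row[OF h ps True] supp by (metis insert_iff)
    then show ?thesis using insert.IH h ps by blast
  next
    case False
    define d where "d = H $ i0 $ i0"
    have dd: "cnj d = d" using herm_cnj[OF h, of i0 i0] unfolding d_def .
    have "Re d \<ge> 0" using ps[rule_format, of "ev i0"] unfolding qform_bil bil_ev_ev d_def .
    define r where "r = Re d"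
    have dr: "d = complex_of_real r" using dd unfolding r_def by (simp add: complex_eq_iff)
    have r0: "r > 0" using \<open>Re d \<ge> 0\<close> False dr unfolding d_def[symmetric] r_def[symmetric] by (cases "r = 0") auto
    define q where "q = complex_of_real (sqrt r)"
    have qq: "q * q = d" unfolding q_def dr using r0 by (simp flip: of_real_mult)
    have cq: "cnj q = q" unfolding q_def by simp
    have q0: "q \<noteq> 0" using r0 unfolding q_def by simp
    define g0 where "g0 = (\<lambda>i. H $ i $ i0 / q)"
    define H' where "H' = (\<chi> i j. H $ i $ j - g0 i * cnj (g0 j))"
    have g0g0: "g0 i * cnj (g0 j) = H $ i $ i0 * H $ i0 $ j / d" for i j
      using q0 unfolding g0_def qq[symmetric] by (simp add: cq herm_cnj[OF h])
    have H'e: "H' $ i $ j = H $ i $ j - H $ i $ i0 * H $ i0 $ j / d" for i j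
      unfolding H'_def by (simp add: g0g0)
    have h': "hermitian H'"
      by (rule herm_I) (simp add: H'e herm_cnj[OF h] dd mult.commute)
    have supp': "\<forall>i j. i \<notin> S \<longrightarrow> H' $ i $ j = 0"
    proof (intro allI impI)
      fix i j assume "i \<notin> S"
      show "H' $ i $ j = 0"
      proof (cases "i = i0")
        case True then show ?thesis using False unfolding H'e d_def by simp
      next
        case F: False
        then show ?thesis using supp \<open>i \<notin> S\<close> unfolding H'e by simp
      qed
    qed
    have ps': "\<forall>x. 0 \<le> Re (qform H' x)"
    proof
      fix x
      define \<beta> where "\<beta> = mv H x i0"
      define \<alpha> where "\<alpha> = \<beta> / d"
      have s1: "(\<Sum>i\<in>UNIV. cnj (x i) * g0 i) = cnj \<beta> / q"
      proof -
        have "(\<Sum>i\<in>UNIV. cnj (x i) * g0 i) = bil H x (ev i0) / q"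
          unfolding g0_def bil_def mv_ev by (simp add: sum_divide_distrib)
        also have "bil H x (ev i0) = cnj \<beta>" using bil_cnj[OF h, of x "ev i0"]
          unfolding bil_ev_left \<beta>_def by simp
        finally show ?thesis .
      qed
      have s2: "(\<Sum>j\<in>UNIV. cnj (g0 j) * x j) = \<beta> / q"
      proof -
        have "(\<Sum>j\<in>UNIV. cnj (g0 j) * x j) = (\<Sum>j\<in>UNIV. H $ i0 $ j * x j) / q"
          unfolding g0_def by (simp add: cq sum_divide_distrib herm_cnj[OF h])
        then show ?thesis unfolding \<beta>_def mv_def by simp
      qed
      have "qform H' x = qform H x - cnj \<beta> * \<beta> / d"
        unfolding qform_bil H'_def bil_rank1_diff s1 s2 qq[symmetric] by simp
      also have "\<dots> = qform H (\<lambda>k. x k - \<alpha> * ev i0 k)"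
      proof -
        have b1: "bil H x (ev i0) = cnj \<beta>" using bil_cnj[OF h, of x "ev i0"]
          unfolding bil_ev_left \<beta>_def by simp
        have b2: "bil H (ev i0) x = \<beta>" unfolding bil_ev_left \<beta>_def ..
        have "qform H (\<lambda>k. x k - \<alpha> * ev i0 k) = qform H x - \<alpha> * cnj \<beta> - cnj \<alpha> * \<beta> + cnj \<alpha> * \<alpha> * d"
          unfolding qform_bil bil_diff_left bil_diff_right bil_scale_left bil_scale_right b1 b2 bil_ev_ev d_def
          by (simp add: algebra_simps)
        also have "\<dots> = qform H x - cnj \<beta> * \<beta> / d"
          unfolding \<alpha>_def using dd False d_def by (simp add: field_simps)
        finally show ?thesis by simp
      qed
      finally show "0 \<le> Re (qform H' x)" using ps by simp
    qed
    obtain n :: nat and g where ng: "\<forall>i j. H' $ i $ j = (\<Sum>k<n. g k i * cnj (g k j))"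
      using insert.IH[OF h' ps' supp'] by blast
    define g' where "g' = g(n := g0)"
    have "\<forall>i j. H $ i $ j = (\<Sum>k<Suc n. g' k i * cnj (g' k j))"
    proof (intro allI)
      fix i j
      have "(\<Sum>k<n. g' k i * cnj (g' k j)) = (\<Sum>k<n. g k i * cnj (g k j))"
        unfolding g'_def by (rule sum.cong) auto
      then show "H $ i $ j = (\<Sum>k<Suc n. g' k i * cnj (g' k j))"
        using ng[rule_format, of i j] unfolding H'_def g'_def by (simp add: algebra_simps)
    qed
    then show ?thesis by blast
  qed
qed

lemma gram:
  fixes H :: "complex^('i::finite)^'i"
  assumes "hermitian H" "\<forall>x. 0 \<le> Re (qform H x)"
  shows "\<exists>(n::nat) g. \<forall>i j. H $ i $ j = (\<Sum>k<n. g k i * cnj (g k j))"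
  using gram_aux[of UNIV H] assms by simp

lemma sum_univ_pair: "(\<Sum>p\<in>(UNIV::('a::finite \<times> 'b::finite) set). f p) = (\<Sum>a\<in>UNIV. \<Sum>b\<in>UNIV. f (a, b))"
  by (simp add: sum.cartesian_product UNIV_Times_UNIV[symmetric] del: UNIV_Times_UNIV)

lemma core:
  fixes \<rho> :: "complex^('a::finite \<times> 'b::finite)^('a \<times> 'b)" and P :: "complex^'a^'a"
    and M :: "complex^('a \<times> 'b)^('a \<times> 'b)" and w :: "'b \<Rightarrow> 'a \<times> 'b \<Rightarrow> complex"
  assumes h: "hermitian \<rho>" and ps: "\<forall>x. 0 \<le> Re (qform \<rho> x)" and hA: "hermitian (ptrace2 \<rho>)"
    and PI: "ptrace2 \<rho> ** P = mat 1" and MI: "\<rho> ** M = mat 1"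
  shows "Re (qform P (\<lambda>a. \<Sum>\<beta>\<in>UNIV. w \<beta> (a, \<beta>))) \<le> (\<Sum>\<beta>\<in>UNIV. Re (qform M (w \<beta>)))"
proof -
  define u where "u = (\<lambda>a. \<Sum>\<beta>\<in>UNIV. w \<beta> (a, \<beta>))"
  define y where "y = mv P u"
  have uy: "mv (ptrace2 \<rho>) y = u" unfolding y_def by (simp add: mv_mult[symmetric] PI mv_one)
  define m where "m = (\<lambda>\<beta>. mv M (w \<beta>))"
  have wm: "mv \<rho> (m \<beta>) = w \<beta>" for \<beta> unfolding m_def by (simp add: mv_mult[symmetric] MI mv_one)
  have L: "qform P u = bil (ptrace2 \<rho>) y y"
  proof -
    have "qform P u = (\<Sum>i\<in>UNIV. cnj (mv (ptrace2 \<rho>) y i) * y i)"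
      unfolding qform_bil bil_def y_def[symmetric] uy ..
    then show ?thesis using herm_swap[OF hA] by simp
  qed
  have R: "qform M (w \<beta>) = bil \<rho> (m \<beta>) (m \<beta>)" for \<beta>
  proof -
    have "qform M (w \<beta>) = (\<Sum>i\<in>UNIV. cnj (mv \<rho> (m \<beta>) i) * m \<beta> i)"
      unfolding qform_bil bil_def wm by (simp add: m_def)
    then show ?thesis using herm_swap[OF h] by simp
  qed
  define t where "t = (\<lambda>\<beta> (p::'a\<times>'b). if snd p = \<beta> then y (fst p) else 0)"
  have S1: "(\<Sum>\<beta>\<in>UNIV. bil \<rho> (t \<beta>) (m \<beta>)) = bil (ptrace2 \<rho>) y y"
  proof -
    have e: "bil \<rho> (t \<beta>) (m \<beta>) = (\<Sum>a\<in>UNIV. cnj (y a) * w \<beta> (a, \<beta>))" for \<beta>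
    proof -
      have "bil \<rho> (t \<beta>) (m \<beta>) = (\<Sum>a\<in>UNIV. \<Sum>b\<in>UNIV. cnj (t \<beta> (a, b)) * w \<beta> (a, b))"
        unfolding bil_def wm sum_univ_pair ..
      also have "\<dots> = (\<Sum>a\<in>UNIV. \<Sum>b\<in>UNIV. if b = \<beta> then cnj (y a) * w \<beta> (a, b) else 0)"
        unfolding t_def by (intro sum.cong) auto
      finally show ?thesis by simp
    qed
    have "(\<Sum>\<beta>\<in>UNIV. bil \<rho> (t \<beta>) (m \<beta>)) = (\<Sum>a\<in>UNIV. cnj (y a) * u a)"
      unfolding e u_def by (subst sum.swap) (simp add: sum_distrib_left)
    also have "\<dots> = bil (ptrace2 \<rho>) y y" unfolding bil_def uy ..
    finally show ?thesis .
  qed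
  have S2: "(\<Sum>\<beta>\<in>UNIV. bil \<rho> (t \<beta>) (t \<beta>)) = bil (ptrace2 \<rho>) y y"
  proof -
    have e: "bil \<rho> (t \<beta>) (t \<beta>) = (\<Sum>a\<in>UNIV. \<Sum>a'\<in>UNIV. cnj (y a) * (\<rho> $ (a, \<beta>) $ (a', \<beta>) * y a'))" for \<beta>
    proof -
      have mt: "mv \<rho> (t \<beta>) p = (\<Sum>a'\<in>UNIV. \<rho> $ p $ (a', \<beta>) * y a')" for p
      proof -
        have "mv \<rho> (t \<beta>) p = (\<Sum>a'\<in>UNIV. \<Sum>b'\<in>UNIV. if b' = \<beta> then \<rho> $ p $ (a', b') * y a' else 0)"
          unfolding mv_def sum_univ_pair t_def by (intro sum.cong) auto
        then show ?thesis by simp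
      qed
      have "bil \<rho> (t \<beta>) (t \<beta>) = (\<Sum>a\<in>UNIV. \<Sum>b\<in>UNIV. if b = \<beta> then cnj (y a) * mv \<rho> (t \<beta>) (a, b) else 0)"
        unfolding bil_def sum_univ_pair t_def by (intro sum.cong) auto
      then show ?thesis by (simp add: mt sum_distrib_left)
    qed
    have "(\<Sum>\<beta>\<in>UNIV. bil \<rho> (t \<beta>) (t \<beta>)) = (\<Sum>a\<in>UNIV. \<Sum>a'\<in>UNIV. cnj (y a) * ((\<Sum>\<beta>\<in>UNIV. \<rho> $ (a, \<beta>) $ (a', \<beta>)) * y a'))"
    proof -
      have "(\<Sum>\<beta>\<in>UNIV. bil \<rho> (t \<beta>) (t \<beta>)) = (\<Sum>a\<in>UNIV. \<Sum>\<beta>\<in>UNIV. \<Sum>a'\<in>UNIV. cnj (y a) * (\<rho> $ (a, \<beta>) $ (a', \<beta>) * y a'))"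
        unfolding e by (rule sum.swap)
      also have "\<dots> = (\<Sum>a\<in>UNIV. \<Sum>a'\<in>UNIV. \<Sum>\<beta>\<in>UNIV. cnj (y a) * (\<rho> $ (a, \<beta>) $ (a', \<beta>) * y a'))"
        by (intro sum.cong refl, rule sum.swap)
      finally show ?thesis by (simp add: sum_distrib_left sum_distrib_right)
    qed
    also have "\<dots> = bil (ptrace2 \<rho>) y y"
      unfolding bil_def mv_def ptrace2_def by (simp add: sum_distrib_left)
    finally show ?thesis .
  qed
  have nn: "Re (bil \<rho> (t \<beta>) (m \<beta>)) + Re (bil \<rho> (t \<beta>) (m \<beta>)) \<le> Re (bil \<rho> (m \<beta>) (m \<beta>)) + Re (bil \<rho> (t \<beta>) (t \<beta>))" for \<beta>
  proof -
    have "0 \<le> Re (qform \<rho> (\<lambda>p. m \<beta> p - t \<beta> p))" using ps by blast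
    also have "qform \<rho> (\<lambda>p. m \<beta> p - t \<beta> p) = bil \<rho> (m \<beta>) (m \<beta>) - bil \<rho> (m \<beta>) (t \<beta>) - bil \<rho> (t \<beta>) (m \<beta>) + bil \<rho> (t \<beta>) (t \<beta>)"
      unfolding qform_bil bil_diff_left bil_diff_right by simp
    finally show ?thesis using bil_cnj[OF h, of "m \<beta>" "t \<beta>"] by simp
  qed
  have "(\<Sum>\<beta>\<in>UNIV. Re (bil \<rho> (t \<beta>) (m \<beta>)) + Re (bil \<rho> (t \<beta>) (m \<beta>))) \<le> (\<Sum>\<beta>\<in>UNIV. Re (bil \<rho> (m \<beta>) (m \<beta>)) + Re (bil \<rho> (t \<beta>) (t \<beta>)))"
    by (rule sum_mono) (rule nn)
  then have ineq: "(\<Sum>\<beta>\<in>UNIV. Re (bil \<rho> (t \<beta>) (m \<beta>))) + (\<Sum>\<beta>\<in>UNIV. Re (bil \<rho> (t \<beta>) (m \<beta>))) \<le> (\<Sum>\<beta>\<in>UNIV. Re (bil \<rho> (m \<beta>) (m \<beta>))) + (\<Sum>\<beta>\<in>UNIV. Re (bil \<rho> (t \<beta>) (t \<beta>)))"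
    by (simp only: sum.distrib)
  have r1: "(\<Sum>\<beta>\<in>UNIV. Re (bil \<rho> (t \<beta>) (m \<beta>))) = Re (bil (ptrace2 \<rho>) y y)"
    using arg_cong[OF S1, of Re] by (simp add: Re_sum)
  have r2: "(\<Sum>\<beta>\<in>UNIV. Re (bil \<rho> (t \<beta>) (t \<beta>))) = Re (bil (ptrace2 \<rho>) y y)"
    using arg_cong[OF S2, of Re] by (simp add: Re_sum)
  have "Re (bil (ptrace2 \<rho>) y y) \<le> (\<Sum>\<beta>\<in>UNIV. Re (bil \<rho> (m \<beta>) (m \<beta>)))"
    using ineq unfolding r1 r2 by linarith
  then show ?thesis unfolding u_def[symmetric] L R by simp
qed

lemma bil_sum_left: "bil H (\<lambda>i. \<Sum>c\<in>C. f c i) z = (\<Sum>c\<in>C. bil H (f c) z)"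
  unfolding bil_def by (simp add: cnj_sum sum_distrib_right) (rule sum.swap)

lemma mv_sum: "mv H (\<lambda>i. \<Sum>c\<in>C. f c i) = (\<lambda>i. \<Sum>c\<in>C. mv H (f c) i)"
  unfolding mv_def by (rule ext) (simp add: sum_distrib_left, rule sum.swap)

lemma bil_sum_right: "bil H x (\<lambda>i. \<Sum>c\<in>C. f c i) = (\<Sum>c\<in>C. bil H x (f c))"
  unfolding bil_def mv_sum by (simp add: sum_distrib_left, rule sum.swap)

lemma qform_diff: "qform (A - B) x = qform A x - qform B x"
  unfolding qform_def by (simp add: ring_distribs sum_subtractf)


lemma qform_ptrace2:
  fixes \<rho> :: "complex^('a::finite \<times> 'b::finite)^('a \<times> 'b)"
  shows "qform (ptrace2 \<rho>) y = (\<Sum>b\<in>UNIV. qform \<rho> (\<lambda>p. if snd p = b then y (fst p) else 0))"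
proof -
  define t where "t = (\<lambda>\<beta> (p::'a\<times>'b). if snd p = \<beta> then y (fst p) else 0)"
  have e: "qform \<rho> (t \<beta>) = (\<Sum>a\<in>UNIV. \<Sum>a'\<in>UNIV. cnj (y a) * (\<rho> $ (a, \<beta>) $ (a', \<beta>) * y a'))" for \<beta>
  proof -
    have mt: "mv \<rho> (t \<beta>) p = (\<Sum>a'\<in>UNIV. \<rho> $ p $ (a', \<beta>) * y a')" for p
    proof -
      have "mv \<rho> (t \<beta>) p = (\<Sum>a'\<in>UNIV. \<Sum>b'\<in>UNIV. if b' = \<beta> then \<rho> $ p $ (a', b') * y a' else 0)"
        unfolding mv_def sum_univ_pair t_def by (intro sum.cong) auto
      then show ?thesis by simp
    qed
    have "bil \<rho> (t \<beta>) (t \<beta>) = (\<Sum>a\<in>UNIV. \<Sum>b\<in>UNIV. if b = \<beta> then cnj (y a) * mv \<rho> (t \<beta>) (a, b) else 0)"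
      unfolding bil_def sum_univ_pair t_def by (intro sum.cong) auto
    then show ?thesis unfolding qform_bil by (simp add: mt sum_distrib_left)
  qed
  have "(\<Sum>\<beta>\<in>UNIV. qform \<rho> (t \<beta>)) = (\<Sum>a\<in>UNIV. \<Sum>\<beta>\<in>UNIV. \<Sum>a'\<in>UNIV. cnj (y a) * (\<rho> $ (a, \<beta>) $ (a', \<beta>) * y a'))"
    unfolding e by (rule sum.swap)
  also have "\<dots> = (\<Sum>a\<in>UNIV. \<Sum>a'\<in>UNIV. \<Sum>\<beta>\<in>UNIV. cnj (y a) * (\<rho> $ (a, \<beta>) $ (a', \<beta>) * y a'))"
    by (intro sum.cong refl, rule sum.swap)
  also have "\<dots> = qform (ptrace2 \<rho>) y"
    unfolding qform_def ptrace2_def by (simp add: sum_distrib_left sum_distrib_right mult.assoc)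
  finally show ?thesis unfolding t_def by simp
qed

lemma pd_ptrace2:
  fixes \<rho> :: "complex^('a::finite \<times> 'b::finite)^('a \<times> 'b)"
  assumes "pd \<rho>"
  shows "pd (ptrace2 \<rho>)"
  unfolding pd_def
proof (intro conjI allI impI)
  show "hermitian (ptrace2 \<rho>)"
    using assms unfolding pd_def by (intro herm_I) (simp add: ptrace2_def cnj_sum herm_cnj)
  fix y :: "'a \<Rightarrow> complex" assume "y \<noteq> (\<lambda>_. 0)"
  then obtain a0 where a0: "y a0 \<noteq> 0" by auto
  have "0 < Re (qform \<rho> (\<lambda>p. if snd p = b then y (fst p) else 0))" for b
  proof -
    have "(\<lambda>p. if snd p = b then y (fst p) else 0) \<noteq> (\<lambda>_. 0)"
      using a0 by (metis fst_conv snd_conv)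
    then show ?thesis using assms unfolding pd_def by blast
  qed
  then have "0 < (\<Sum>b\<in>UNIV. Re (qform \<rho> (\<lambda>p. if snd p = b then y (fst p) else 0)))"
    by (intro sum_pos) auto
  then show "0 < Re (qform (ptrace2 \<rho>) y)" unfolding qform_ptrace2 by (simp add: Re_sum)
qed

lemma E1A:
  fixes P :: "complex^('a::finite)^'a" and \<sigma> :: "complex^('q::finite)^'q" and v :: "'a \<times> 'q \<Rightarrow> complex"
  shows "qform (kron P \<sigma>) v = (\<Sum>q\<in>UNIV. \<Sum>q'\<in>UNIV. \<sigma> $ q $ q' * bil P (\<lambda>a. v (a, q)) (\<lambda>a. v (a, q')))"
proof -
  have "qform (kron P \<sigma>) v = (\<Sum>a\<in>UNIV. \<Sum>q\<in>UNIV. \<Sum>a'\<in>UNIV. \<Sum>q'\<in>UNIV. cnj (v (a, q)) * (P $ a $ a' * \<sigma> $ q $ q') * v (a', q'))"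
    unfolding qform_def kron_def sum_univ_pair by simp
  also have "\<dots> = (\<Sum>a\<in>UNIV. \<Sum>q\<in>UNIV. \<Sum>q'\<in>UNIV. \<Sum>a'\<in>UNIV. cnj (v (a, q)) * (P $ a $ a' * \<sigma> $ q $ q') * v (a', q'))"
    by (intro sum.cong refl, rule sum.swap)
  also have "\<dots> = (\<Sum>q\<in>UNIV. \<Sum>a\<in>UNIV. \<Sum>q'\<in>UNIV. \<Sum>a'\<in>UNIV. cnj (v (a, q)) * (P $ a $ a' * \<sigma> $ q $ q') * v (a', q'))"
    by (rule sum.swap)
  also have "\<dots> = (\<Sum>q\<in>UNIV. \<Sum>q'\<in>UNIV. \<Sum>a\<in>UNIV. \<Sum>a'\<in>UNIV. cnj (v (a, q)) * (P $ a $ a' * \<sigma> $ q $ q') * v (a', q'))"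
    by (intro sum.cong refl, rule sum.swap)
  also have "\<dots> = (\<Sum>q\<in>UNIV. \<Sum>q'\<in>UNIV. \<sigma> $ q $ q' * bil P (\<lambda>a. v (a, q)) (\<lambda>a. v (a, q')))"
    unfolding bil_def mv_def by (simp add: sum_distrib_left mult_ac)
  finally show ?thesis .
qed

lemma E1B:
  fixes P :: "complex^('a::finite)^'a" and f :: "'q::finite \<Rightarrow> 'a \<Rightarrow> complex"
  shows "qform P (\<lambda>a. \<Sum>q\<in>UNIV. cnj (h q) * f q a) = (\<Sum>q\<in>UNIV. \<Sum>q'\<in>UNIV. h q * cnj (h q') * bil P (f q) (f q'))"
  unfolding qform_bil bil_sum_left bil_sum_right bil_scale_left bil_scale_right
  by (simp add: sum_distrib_left mult_ac)

lemma E1: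
  fixes P :: "complex^('a::finite)^'a" and \<sigma> :: "complex^('b::finite \<times> 'c::finite)^('b \<times> 'c)"
    and v :: "'a \<times> 'b \<times> 'c \<Rightarrow> complex" and g :: "nat \<Rightarrow> 'b \<times> 'c \<Rightarrow> complex"
  assumes \<sigma>e: "\<forall>i j. \<sigma> $ i $ j = (\<Sum>k<n. g k i * cnj (g k j))"
  shows "qform (kron P \<sigma>) v = (\<Sum>k<n. qform P (\<lambda>a. \<Sum>\<beta>\<in>UNIV. \<Sum>c\<in>UNIV. cnj (g k (\<beta>, c)) * v (a, \<beta>, c)))"
proof -
  have u: "(\<lambda>a. \<Sum>\<beta>\<in>UNIV. \<Sum>c\<in>UNIV. cnj (g k (\<beta>, c)) * v (a, \<beta>, c)) = (\<lambda>a. \<Sum>q\<in>UNIV. cnj (g k q) * (\<lambda>q a. v (a, q)) q a)" for k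
    by (simp add: sum_univ_pair)
  have "(\<Sum>k<n. qform P (\<lambda>a. \<Sum>\<beta>\<in>UNIV. \<Sum>c\<in>UNIV. cnj (g k (\<beta>, c)) * v (a, \<beta>, c)))
      = (\<Sum>k<n. \<Sum>q\<in>UNIV. \<Sum>q'\<in>UNIV. g k q * cnj (g k q') * bil P (\<lambda>a. v (a, q)) (\<lambda>a. v (a, q')))"
    unfolding u E1B ..
  also have "\<dots> = (\<Sum>q\<in>UNIV. \<Sum>k<n. \<Sum>q'\<in>UNIV. g k q * cnj (g k q') * bil P (\<lambda>a. v (a, q)) (\<lambda>a. v (a, q')))"
    by (rule sum.swap)
  also have "\<dots> = (\<Sum>q\<in>UNIV. \<Sum>q'\<in>UNIV. \<Sum>k<n. g k q * cnj (g k q') * bil P (\<lambda>a. v (a, q)) (\<lambda>a. v (a, q')))"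
    by (intro sum.cong refl, rule sum.swap)
  also have "\<dots> = qform (kron P \<sigma>) v"
    unfolding E1A \<sigma>e[rule_format] by (simp add: sum_distrib_right)
  finally show ?thesis by simp
qed

lemma E2A:
  fixes M :: "complex^('a::finite \<times> 'b::finite)^('a \<times> 'b)" and \<tau> :: "complex^('c::finite)^'c" and v :: "'a \<times> 'b \<times> 'c \<Rightarrow> complex"
  shows "qform (reassoc (kron M \<tau>)) v = (\<Sum>c\<in>UNIV. \<Sum>c'\<in>UNIV. \<tau> $ c $ c' * bil M (\<lambda>p. v (fst p, snd p, c)) (\<lambda>p. v (fst p, snd p, c')))"
proof -
  have "qform (reassoc (kron M \<tau>)) v = (\<Sum>a\<in>UNIV. \<Sum>b\<in>UNIV. \<Sum>c\<in>UNIV. \<Sum>a'\<in>UNIV. \<Sum>b'\<in>UNIV. \<Sum>c'\<in>UNIV.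
      cnj (v (a, b, c)) * (M $ (a, b) $ (a', b') * \<tau> $ c $ c') * v (a', b', c'))"
    unfolding qform_def kron_def reassoc_def sum_univ_pair by simp
  also have "\<dots> = (\<Sum>c\<in>UNIV. \<Sum>c'\<in>UNIV. \<Sum>a\<in>UNIV. \<Sum>b\<in>UNIV. \<Sum>a'\<in>UNIV. \<Sum>b'\<in>UNIV.
      cnj (v (a, b, c)) * (M $ (a, b) $ (a', b') * \<tau> $ c $ c') * v (a', b', c'))"
    by (simp only: sum.swap[where A="UNIV::'a set" and B="UNIV::'c set"] sum.swap[where A="UNIV::'b set" and B="UNIV::'c set"])
  also have "\<dots> = (\<Sum>c\<in>UNIV. \<Sum>c'\<in>UNIV. \<tau> $ c $ c' * bil M (\<lambda>p. v (fst p, snd p, c)) (\<lambda>p. v (fst p, snd p, c')))"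
    unfolding bil_def mv_def sum_univ_pair by (simp add: sum_distrib_left mult_ac)
  finally show ?thesis .
qed

lemma E2:
  fixes M :: "complex^('a::finite \<times> 'b::finite)^('a \<times> 'b)" and \<sigma> :: "complex^('b \<times> 'c::finite)^('b \<times> 'c)"
    and v :: "'a \<times> 'b \<times> 'c \<Rightarrow> complex" and g :: "nat \<Rightarrow> 'b \<times> 'c \<Rightarrow> complex"
  assumes \<sigma>e: "\<forall>i j. \<sigma> $ i $ j = (\<Sum>k<n. g k i * cnj (g k j))"
  shows "qform (reassoc (kron M (ptrace1 \<sigma>))) v =
    (\<Sum>k<n. \<Sum>\<beta>\<in>UNIV. qform M (\<lambda>p. \<Sum>c\<in>UNIV. cnj (g k (\<beta>, c)) * v (fst p, snd p, c)))"
proof -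
  let ?V = "\<lambda>c p. v (fst p, snd p, c)"
  have "(\<Sum>k<n. \<Sum>\<beta>\<in>UNIV. qform M (\<lambda>p. \<Sum>c\<in>UNIV. cnj (g k (\<beta>, c)) * v (fst p, snd p, c)))
     = (\<Sum>k<n. \<Sum>\<beta>\<in>UNIV. \<Sum>c\<in>UNIV. \<Sum>c'\<in>UNIV. g k (\<beta>, c) * cnj (g k (\<beta>, c')) * bil M (?V c) (?V c'))"
    using E1B[of M "\<lambda>c. g _ (_, c)" ?V] by simp
  also have "\<dots> = (\<Sum>c\<in>UNIV. \<Sum>c'\<in>UNIV. \<Sum>\<beta>\<in>UNIV. \<Sum>k<n. g k (\<beta>, c) * cnj (g k (\<beta>, c')) * bil M (?V c) (?V c'))"
    by (simp only: sum.swap[where A="{..<n}"] sum.swap[where A="UNIV::'b set" and B="UNIV::'c set"])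
  also have "\<dots> = qform (reassoc (kron M (ptrace1 \<sigma>))) v"
    unfolding E2A ptrace1_def \<sigma>e[rule_format] by (simp add: sum_distrib_right)
  finally show ?thesis by simp
qed

theorem lemma1:
  fixes \<rho>AB :: "complex^('a::finite \<times> 'b::finite)^('a \<times> 'b)"
    and \<sigma>BC :: "complex^('b \<times> 'c::finite)^('b \<times> 'c)"
  assumes "density \<rho>AB" and "pd \<rho>AB"
    and "density \<sigma>BC" and "pd \<sigma>BC"
  shows "loewner_le (kron (matrix_inv (ptrace2 \<rho>AB)) \<sigma>BC)
                    (reassoc (kron (matrix_inv \<rho>AB) (ptrace1 \<sigma>BC)))"
proof -
  have h\<rho>: "hermitian \<rho>AB" and ps\<rho>: "\<forall>x. 0 \<le> Re (qform \<rho>AB x)"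
    using assms(1) unfolding density_def psd_def by auto
  have h\<sigma>: "hermitian \<sigma>BC" and ps\<sigma>: "\<forall>x. 0 \<le> Re (qform \<sigma>BC x)"
    using assms(3) unfolding density_def psd_def by auto
  have pdA: "pd (ptrace2 \<rho>AB)" using pd_ptrace2[OF assms(2)] .
  then have hA: "hermitian (ptrace2 \<rho>AB)" unfolding pd_def by simp
  define P where "P = matrix_inv (ptrace2 \<rho>AB)"
  define M where "M = matrix_inv \<rho>AB"
  have PI: "ptrace2 \<rho>AB ** P = mat 1" "P ** ptrace2 \<rho>AB = mat 1"
    using pd_invertible[OF pdA] unfolding P_def by auto
  have MI: "\<rho>AB ** M = mat 1" "M ** \<rho>AB = mat 1"
    using pd_invertible[OF assms(2)] unfolding M_def by auto
  have hP: "hermitian P" using inv_herm[OF hA PI] .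
  have hM: "hermitian M" using inv_herm[OF h\<rho> MI] .
  have hC: "hermitian (ptrace1 \<sigma>BC)"
    by (rule herm_I) (simp add: ptrace1_def cnj_sum herm_cnj[OF h\<sigma>])
  obtain n :: nat and g where ng: "\<forall>i j. \<sigma>BC $ i $ j = (\<Sum>k<n. g k i * cnj (g k j))"
    using gram[OF h\<sigma> ps\<sigma>] by blast
  let ?L = "kron P \<sigma>BC" and ?R = "reassoc (kron M (ptrace1 \<sigma>BC))"
  have herm: "hermitian (?R - ?L)"
    unfolding hermitian_def reassoc_def kron_def
    by (simp add: herm_cnj[OF hM] herm_cnj[OF hP] herm_cnj[OF h\<sigma>] herm_cnj[OF hC])
  have "0 \<le> Re (qform (?R - ?L) v)" for v
  proof -
    let ?W = "\<lambda>k \<beta> (p::'a \<times> 'b). \<Sum>c\<in>UNIV. cnj (g k (\<beta>, c)) * v (fst p, snd p, c)"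
    have "Re (qform P (\<lambda>a. \<Sum>\<beta>\<in>UNIV. ?W k \<beta> (a, \<beta>))) \<le> (\<Sum>\<beta>\<in>UNIV. Re (qform M (?W k \<beta>)))" for k
      by (rule core[OF h\<rho> ps\<rho> hA PI(1) MI(1)])
    then have "(\<Sum>k<n. Re (qform P (\<lambda>a. \<Sum>\<beta>\<in>UNIV. ?W k \<beta> (a, \<beta>)))) \<le> (\<Sum>k<n. \<Sum>\<beta>\<in>UNIV. Re (qform M (?W k \<beta>)))"
      by (rule sum_mono)
    then show ?thesis
      unfolding qform_diff E1[OF ng] E2[OF ng] by (simp add: Re_sum)
  qed
  then show ?thesis
    unfolding loewner_le_def psd_def P_def[symmetric] M_def[symmetric] using herm by blast
qed

end
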